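(* Let $W$ be an $n\times n$ matrix with $\pm1$ entries. Assume that there exists a sequence $0\le j(1),\ldots,j(n)\le n$ such that $W_{ij}=-1$ if $j\le j(i)$ and $W_{ij}=1$ if $j>j(i)$. Then $W$ is $O(\log(n))$-decomposable.
   Context: For an $n\times m$ matrix $W$, $\mathrm{sym}(W)=\begin{bmatrix}0 & W\\ W^T & 0\end{bmatrix}$; $W$ is $\beta$-decomposable if there exist positive semi-definite matrices $P,N$ with $\mathrm{sym}(W)=P-N$ and $P_{ii},N_{ii}\le\beta$ for all $i$. This generalizes the known fact (Hazan, Kale, Shalev-Shwartz) that the $n\times n$ matrix with $1$ on and above the diagonal and $-1$ below it is $O(\log n)$-decomposable. *)

theory Defs
  imports "Jordan_Normal_Form.Matrix"
begin

definition psd_mat :: "real mat \<Rightarrow> bool" where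
  "psd_mat P \<longleftrightarrow> dim_row P = dim_col P \<and> transpose_mat P = P \<and>
     (\<forall>v \<in> carrier_vec (dim_row P). v \<bullet> (P *\<^sub>v v) \<ge> 0)"

definition sym_mat :: "real mat \<Rightarrow> real mat" where
  "sym_mat W = four_block_mat (0\<^sub>m (dim_row W) (dim_row W)) W
                              (transpose_mat W) (0\<^sub>m (dim_col W) (dim_col W))"

definition decomposable :: "real \<Rightarrow> real mat \<Rightarrow> bool" where
  "decomposable \<beta> W \<longleftrightarrow>
     (\<exists>P N. psd_mat P \<and> psd_mat N \<and>
        dim_row P = dim_row W + dim_col W \<and> dim_row N = dim_row W + dim_col W \<and>
        sym_mat W = P - N \<and>
        (\<forall>i < dim_row W + dim_col W. P $$ (i,i) \<le> \<beta> \<and> N $$ (i,i) \<le> \<beta>))"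

end

theory Submission
  imports Defs "HOL-Library.Discrete_Functions"
begin

lemma psd_gram:
  fixes f :: "'k \<Rightarrow> nat \<Rightarrow> real"
  assumes fin: "finite S" and c: "c \<ge> 0"
  shows "psd_mat (mat d d (\<lambda>(x,y). c * (\<Sum>k\<in>S. f k x * f k y)))"
proof -
  let ?P = "mat d d (\<lambda>(x,y). c * (\<Sum>k\<in>S. f k x * f k y))"
  have tr: "transpose_mat ?P = ?P"
    by (rule eq_matI) (auto simp: mult.commute)
  have q: "v \<bullet> (?P *\<^sub>v v) \<ge> 0" if v: "v \<in> carrier_vec d" for v
  proof -
    have "v \<bullet> (?P *\<^sub>v v) = (\<Sum>x<d. v$x * (\<Sum>y<d. c * (\<Sum>k\<in>S. f k x * f k y) * v$y))"
      using v by (auto simp: scalar_prod_def mult_mat_vec_def row_def atLeast0LessThan intro!: sum.cong)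
    also have "\<dots> = (\<Sum>x<d. \<Sum>y<d. \<Sum>k\<in>S. c * ((f k x * v$x) * (f k y * v$y)))"
      by (simp add: sum_distrib_left sum_distrib_right mult_ac)
    also have "\<dots> = (\<Sum>k\<in>S. \<Sum>x<d. \<Sum>y<d. c * ((f k x * v$x) * (f k y * v$y)))"
      apply (subst sum.swap[of _ "{..<d}" S])
      apply (rule sum.cong[OF refl])
      apply (subst sum.swap[of _ "{..<d}" S])
      by simp
    also have "\<dots> = (\<Sum>k\<in>S. c * (\<Sum>x<d. f k x * v$x)^2)"
      by (simp add: power2_eq_square sum_distrib_left sum_distrib_right mult_ac)
    also have "\<dots> \<ge> 0" using c by (intro sum_nonneg) auto
    finally show ?thesis .
  qed
  show ?thesis unfolding psd_mat_def using tr q by auto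
qed

lemma bits_less:
  fixes a j :: nat
  assumes "a < 2^K" "j < 2^K"
  shows "of_bool (j < a) = (\<Sum>b<K. of_bool (a div 2^(b+1) = j div 2^(b+1) \<and> odd (a div 2^b) \<and> even (j div 2^b)) :: real)"
  using assms
proof (induction K arbitrary: a j)
  case 0 then show ?case by simp
next
  case (Suc K)
  have a: "a div 2 < 2^K" "j div 2 < 2^K" using Suc.prems by auto
  have e: "(\<Sum>b<K. of_bool (a div 2^(Suc b+1) = j div 2^(Suc b+1) \<and> odd (a div 2^Suc b) \<and> even (j div 2^Suc b)) :: real)
    = (\<Sum>b<K. of_bool ((a div 2) div 2^(b+1) = (j div 2) div 2^(b+1) \<and> odd ((a div 2) div 2^b) \<and> even ((j div 2) div 2^b)))"
  proof (rule sum.cong[OF refl])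
    fix b
    have "\<And>x::nat. x div 2^(Suc b+1) = x div 2 div 2^(b+1)" "\<And>x::nat. x div 2^(Suc b) = x div 2 div 2^b"
      by (simp_all add: div_mult2_eq[symmetric] mult.commute)
    then show "(of_bool (a div 2^(Suc b+1) = j div 2^(Suc b+1) \<and> odd (a div 2^Suc b) \<and> even (j div 2^Suc b)) :: real)
      = of_bool ((a div 2) div 2^(b+1) = (j div 2) div 2^(b+1) \<and> odd ((a div 2) div 2^b) \<and> even ((j div 2) div 2^b))"
      by simp
  qed
  have "(\<Sum>b<Suc K. of_bool (a div 2^(b+1) = j div 2^(b+1) \<and> odd (a div 2^b) \<and> even (j div 2^b)) :: real)
     = of_bool (a div 2 = j div 2 \<and> odd a \<and> even j) + of_bool (j div 2 < a div 2)"
    unfolding sum.lessThan_Suc_shift e Suc.IH[OF a, symmetric] by simp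
  also have "\<dots> = of_bool (j < a)"
    by (auto simp: of_bool_def) presburger+
  finally show ?case by simp
qed

lemma decomp_from_factor:
  fixes g h :: "'k \<Rightarrow> nat \<Rightarrow> real"
  assumes W: "W \<in> carrier_mat n m" and fin: "finite S"
  and fac: "\<And>i j. i<n \<Longrightarrow> j<m \<Longrightarrow> W $$ (i,j) = (\<Sum>k\<in>S. g k i * h k j)"
  and gb: "\<And>i. i<n \<Longrightarrow> (\<Sum>k\<in>S. (g k i)^2) \<le> 2*\<beta>"
  and hb: "\<And>j. j<m \<Longrightarrow> (\<Sum>k\<in>S. (h k j)^2) \<le> 2*\<beta>"
  shows "decomposable \<beta> W"
proof -
  define F where "F k x = (if x < n then g k x else h k (x-n))" for k x
  define G where "G k x = (if x < n then g k x else - h k (x-n))" for k x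
  define P where "P = mat (n+m) (n+m) (\<lambda>(x,y). (1/2) * (\<Sum>k\<in>S. F k x * F k y))"
  define N where "N = mat (n+m) (n+m) (\<lambda>(x,y). (1/2) * (\<Sum>k\<in>S. G k x * G k y))"
  have dW: "dim_row W = n" "dim_col W = m" using W by auto
  have pP: "psd_mat P" unfolding P_def by (rule psd_gram[OF fin]) simp
  have pN: "psd_mat N" unfolding N_def by (rule psd_gram[OF fin]) simp
  have eq: "sym_mat W = P - N"
  proof (rule eq_matI)
    fix x y assume x: "x < dim_row (P - N)" and y: "y < dim_col (P - N)"
    then have x': "x < n+m" and y': "y < n+m" by (auto simp: P_def N_def)
    have "(P - N) $$ (x,y) = (1/2) * (\<Sum>k\<in>S. F k x * F k y - G k x * G k y)"
      using x' y' by (simp add: P_def N_def sum_subtractf algebra_simps)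
    also have "\<dots> = sym_mat W $$ (x,y)"
    proof (cases "x < n")
      case True
      show ?thesis
      proof (cases "y < n")
        case True
        then show ?thesis using \<open>x<n\<close> by (simp add: sym_mat_def dW F_def G_def)
      next
        case False
        then show ?thesis using \<open>x<n\<close> x' y' fac[of x "y-n"]
          by (simp add: sym_mat_def dW F_def G_def sum_distrib_left)
      qed
    next
      case False
      show ?thesis
      proof (cases "y < n")
        case True
        then show ?thesis using \<open>\<not> x<n\<close> x' y' fac[of y "x-n"]
          by (simp add: sym_mat_def dW F_def G_def sum_distrib_left mult.commute)
      next
        case False
        then show ?thesis using \<open>\<not> x<n\<close> x' y' by (simp add: sym_mat_def dW F_def G_def)
      qed
    qed
    finally show "sym_mat W $$ (x,y) = (P - N) $$ (x,y)" by simp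
  qed (auto simp: sym_mat_def P_def N_def dW)
  have diag: "P $$ (i,i) \<le> \<beta> \<and> N $$ (i,i) \<le> \<beta>" if i: "i < n + m" for i
  proof (cases "i < n")
    case True
    then show ?thesis using gb[OF True] i by (simp add: P_def N_def F_def G_def power2_eq_square)
  next
    case False
    then have "i - n < m" using i by auto
    then show ?thesis using hb[of "i-n"] i False by (simp add: P_def N_def F_def G_def power2_eq_square)
  qed
  show ?thesis unfolding decomposable_def
    by (rule exI[of _ P], rule exI[of _ N]) (use pP pN eq diag dW in \<open>auto simp: P_def N_def\<close>)
qed

lemma inner1:
  fixes c :: real and M :: nat
  assumes "A < M"
  shows "(\<Sum>m<M. (if m = A \<and> p then c else 0) * of_bool (m = B \<and> q)) = c * of_bool (A = B \<and> p \<and> q)"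
proof -
  have "(\<Sum>m<M. (if m = A \<and> p then c else 0) * of_bool (m = B \<and> q)) = (\<Sum>m<M. if m = A then (c * of_bool (A = B \<and> p \<and> q)) else 0)"
    by (rule sum.cong) auto
  also have "\<dots> = (if A \<in> {..<M} then c * of_bool (A = B \<and> p \<and> q) else 0)"
    by (rule sum.delta) simp
  finally show ?thesis using assms by simp
qed

lemma inner2:
  fixes c :: real and M :: nat
  shows "(\<Sum>m<M. (if m = A \<and> p then c else 0)^2) \<le> c^2"
proof -
  have "(\<Sum>m<M. (if m = A \<and> p then c else 0)^2) = (\<Sum>m<M. if m = A then (if p then c^2 else 0) else 0)"
    by (rule sum.cong) auto
  also have "\<dots> = (if A \<in> {..<M} then (if p then c^2 else 0) else 0)"
    by (rule sum.delta) simp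
  finally show ?thesis by simp
qed

lemma key_decomp:
  fixes n :: nat and W :: "real mat" and jf :: "nat \<Rightarrow> nat"
  assumes n: "n \<ge> 2" and W: "W \<in> carrier_mat n n"
    and jfn: "\<forall>i<n. jf i \<le> n"
    and Wv: "\<forall>i<n. \<forall>j<n. (j < jf i \<longrightarrow> W $$ (i,j) = -1) \<and> (jf i \<le> j \<longrightarrow> W $$ (i,j) = 1)"
  shows "decomposable (5 / ln 2 * ln (real n)) W"
proof -
  define K where "K = floor_log n"
  define L where "L = Suc K"
  have nL: "n < 2^L" using floor_log_exp2_gt[of n] by (simp add: L_def K_def)
  have Kn: "2^K \<le> n" using floor_log_exp2_le[of n] n by (simp add: K_def)
  define S where "S = {..<Suc L} \<times> {..<(2::nat)^L}"
  define g :: "nat \<times> nat \<Rightarrow> nat \<Rightarrow> real" where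
    "g = (\<lambda>(b,m) i. if b = L then of_bool (m = 0) else (if m = jf i div 2^(b+1) \<and> odd (jf i div 2^b) then -2 else 0))"
  define h :: "nat \<times> nat \<Rightarrow> nat \<Rightarrow> real" where
    "h = (\<lambda>(b,m) j. if b = L then of_bool (m = 0) else of_bool (m = j div 2^(b+1) \<and> even (j div 2^b)))"
  have sumS: "(\<Sum>k\<in>S. f k) = (\<Sum>b<L. \<Sum>m<2^L. f (b,m)) + (\<Sum>m<2^L. f (L,m))" for f :: "nat \<times> nat \<Rightarrow> real"
  proof -
    have "(\<Sum>b<Suc L. \<Sum>m<(2::nat)^L. f (b,m)) = (\<Sum>(b,m)\<in>S. f (b,m))"
      unfolding S_def by (rule sum.cartesian_product)
    then show ?thesis by simp
  qed
  have fac: "W $$ (i,j) = (\<Sum>k\<in>S. g k i * h k j)" if i: "i < n" and j: "j < n" for i j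
  proof -
    have a: "jf i < 2^L" using jfn i nL by force
    have jL: "j < 2^L" using j nL by simp
    have dv: "jf i div 2^(b+1) < 2^L" for b using a by (meson div_le_dividend le_less_trans)
    have "(\<Sum>k\<in>S. g k i * h k j) = (\<Sum>b<L. -2 * of_bool (jf i div 2^(b+1) = j div 2^(b+1) \<and> odd (jf i div 2^b) \<and> even (j div 2^b))) + 1"
      unfolding sumS
    proof (intro arg_cong2[where f="(+)"] sum.cong refl)
      fix b assume "b \<in> {..<L}"
      then have "b \<noteq> L" by simp
      then show "(\<Sum>m<2^L. g (b,m) i * h (b,m) j) = -2 * of_bool (jf i div 2^(b+1) = j div 2^(b+1) \<and> odd (jf i div 2^b) \<and> even (j div 2^b))"
        using inner1[OF dv[of b]] by (simp add: g_def h_def)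
    next
      have "(\<Sum>m<(2::nat)^L. g (L,m) i * h (L,m) j) = (\<Sum>m<(2::nat)^L. if m = 0 then 1 else 0)"
        by (rule sum.cong) (auto simp: g_def h_def)
      then show "(\<Sum>m<(2::nat)^L. g (L,m) i * h (L,m) j) = 1" by simp
    qed
    also have "\<dots> = 1 - 2 * of_bool (j < jf i)"
      using bits_less[OF a jL] sum_distrib_left[of "-2::real" "\<lambda>b. of_bool (jf i div 2^(b+1) = j div 2^(b+1) \<and> odd (jf i div 2^b) \<and> even (j div 2^b))" "{..<L}"]
      by simp
    also have "\<dots> = W $$ (i,j)" using Wv i j by (cases "j < jf i") auto
    finally show ?thesis by simp
  qed
  have gb: "(\<Sum>k\<in>S. (g k i)^2) \<le> 4 * K + 5" for i
  proof -
    have "(\<Sum>k\<in>S. (g k i)^2) \<le> (\<Sum>b<L. 4) + 1"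
      unfolding sumS
    proof (intro add_mono sum_mono)
      fix b assume "b \<in> {..<L}"
      then show "(\<Sum>m<2^L. (g (b,m) i)^2) \<le> 4" using inner2[where M="2^L" and c="-2"] by (simp add: g_def)
    next
      have "(\<Sum>m<(2::nat)^L. (g (L,m) i)^2) = (\<Sum>m<(2::nat)^L. if m = 0 then 1 else 0)"
        by (rule sum.cong) (auto simp: g_def)
      then show "(\<Sum>m<(2::nat)^L. (g (L,m) i)^2) \<le> 1" by simp
    qed
    then show ?thesis by (simp add: L_def)
  qed
  have hb: "(\<Sum>k\<in>S. (h k j)^2) \<le> 4 * K + 5" for j
  proof -
    have "(\<Sum>k\<in>S. (h k j)^2) \<le> (\<Sum>b<L. 1) + 1"
      unfolding sumS
    proof (intro add_mono sum_mono)
      fix b assume "b \<in> {..<L}"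
      then show "(\<Sum>m<2^L. (h (b,m) j)^2) \<le> 1" using inner2[where M="2^L" and c="1"] by (simp add: h_def of_bool_def if_distrib)
    next
      have "(\<Sum>m<(2::nat)^L. (h (L,m) j)^2) = (\<Sum>m<(2::nat)^L. if m = 0 then 1 else 0)"
        by (rule sum.cong) (auto simp: h_def)
      then show "(\<Sum>m<(2::nat)^L. (h (L,m) j)^2) \<le> 1" by simp
    qed
    then show ?thesis by (simp add: L_def)
  qed
  have l2: "ln 2 > (0::real)" by simp
  have lnn: "ln 2 \<le> ln (real n)" using n by simp
  have "real K * ln 2 = ln (2^K)" by (simp add: ln_realpow)
  also have "\<dots> \<le> ln (real n)"
  proof (rule ln_mono)
    have "real (2^K) \<le> real n" using Kn by (rule of_nat_mono)
    then show "(2::real)^K \<le> real n" by simp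
  qed simp_all
  finally have Kb: "real K * ln 2 \<le> ln (real n)" .
  have e4: "(4 * real K + 5) * ln 2 = 4 * (real K * ln 2) + 5 * ln 2" by (simp add: algebra_simps)
  have "(4 * real K + 5) * ln 2 \<le> 10 * ln (real n)" unfolding e4 using Kb lnn l2 by linarith
  then have B: "4 * real K + 5 \<le> 2 * (5 / ln 2 * ln (real n))"
    using l2 by (simp add: field_simps)
  show ?thesis
  proof (rule decomp_from_factor[OF W _ fac])
    show "finite S" by (simp add: S_def)
    show "(\<Sum>k\<in>S. (g k i)^2) \<le> 2 * (5 / ln 2 * ln (real n))" for i using gb[of i] B by linarith
    show "(\<Sum>k\<in>S. (h k i)^2) \<le> 2 * (5 / ln 2 * ln (real n))" for i using hb[of i] B by linarith
  qed auto
qed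

theorem proposition4:
  shows "\<exists>C::real. \<forall>(n::nat) (W::real mat) (jf::nat \<Rightarrow> nat).
     n \<ge> 2 \<and> W \<in> carrier_mat n n \<and>
     (\<forall>i<n. \<forall>j<n. W $$ (i,j) = 1 \<or> W $$ (i,j) = -1) \<and>
     (\<forall>i<n. jf i \<le> n) \<and>
     (\<forall>i<n. \<forall>j<n. (j < jf i \<longrightarrow> W $$ (i,j) = -1) \<and> (jf i \<le> j \<longrightarrow> W $$ (i,j) = 1))
     \<longrightarrow> decomposable (C * ln (real n)) W"
  by (rule exI[of _ "5 / ln 2"]) (blast intro: key_decomp)

end
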